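(* Let $P$ be a positive opetope and let $P^{op}$ be the positive hypergraph obtained from $P$ by interchanging the values of $\gamma$ and $\delta$ on the faces of dimension $1$ (i.e. for $a\in P_1$, the codomain of $a$ in $P^{op}$ is the unique element of $\delta(a)$ and $\delta^{P^{op}}(a)=\{\gamma(a)\}$), leaving everything else unchanged. Then $P^{op}$ is a positive opetope.
   Context: A positive hypergraph $S$ consists of finite sets $S_k$ ($k\in\mathbb{N}$), only finitely many nonempty, functions $\gamma:S_{k+1}\to S_k$, and for each $k$ an assignment $\delta$ sending each $a\in S_{k+1}$ to a nonempty subset $\delta(a)\subseteq S_k$, with $\delta(a)$ a singleton for $a\in S_1$. A face is identified with its singleton; $\gamma(X)=\{\gamma(a):a\in X\}$, $\delta(X)=\bigcup_{a\in X}\delta(a)$. For $k>0$ the lower order $<^-$ on $S_k$ is the transitive closure of: $a\lhd b$ iff $\gamma(a)\in\delta(b)$. The upper order $<^+$ on $S_k$ is the transitive closure of: $a\lhd b$ iff there is $\alpha\in S_{k+1}$ with $a\in\delta(\alpha)$, $\gamma(\alpha)=b$; $a\perp^{\pm}b$ iff $a<^{\pm}b$ or $b<^{\pm}a$. A positive opetopic cardinal is a positive hypergraph with $S_0\ne\emptyset$ such that: globularity ($\gamma\gamma(a)=\gamma\delta(a)-\delta\delta(a)$, $\delta\gamma(a)=\delta\delta(a)-\gamma\delta(a)$ for $\dim a\ge2$); each $<^+$ is a strict order, linear on $S_0$; for $k>0$, $\perp^-\cap\perp^+=\emptyset$ on $S_k$; for $x\in S_{k-1}$, $\{a:\gamma(a)=x\}$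 and $\{a:x\in\delta(a)\}$ are linearly ordered by $<^+$. A positive opetope is a positive opetopic cardinal with $|P_m-\delta(P_{m+1})|\le1$ for all $m$. *)

theory Defs
  imports Main
begin

text \<open>Graded pieces S_k are the faces of
dimension k. Values of cod/dom on 0-dimensional faces or on non-faces are
irrelevant.\<close>

record 'a phg =
  faces :: "'a set"
  dim   :: "'a \<Rightarrow> nat"
  cod   :: "'a \<Rightarrow> 'a"
  dom   :: "'a \<Rightarrow> 'a set"

definition lvl :: "'a phg \<Rightarrow> nat \<Rightarrow> 'a set" where
  "lvl S k = {a \<in> faces S. dim S a = k}"

definition codS :: "'a phg \<Rightarrow> 'a set \<Rightarrow> 'a set" where
  "codS S X = cod S ` X"

definition domS :: "'a phg \<Rightarrow> 'a set \<Rightarrow> 'a set" where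
  "domS S X = (\<Union>a\<in>X. dom S a)"

definition positive_hypergraph :: "'a phg \<Rightarrow> bool" where
  "positive_hypergraph S \<longleftrightarrow>
     finite (faces S) \<and>
     (\<forall>k. \<forall>a \<in> lvl S (Suc k).
        cod S a \<in> lvl S k \<and> dom S a \<subseteq> lvl S k \<and> dom S a \<noteq> {}) \<and>
     (\<forall>a \<in> lvl S 1. card (dom S a) = 1)"

definition lower_gen :: "'a phg \<Rightarrow> nat \<Rightarrow> ('a \<times> 'a) set" where
  "lower_gen S k = {(a, b). a \<in> lvl S k \<and> b \<in> lvl S k \<and> cod S a \<in> dom S b}"

definition lower_ord :: "'a phg \<Rightarrow> nat \<Rightarrow> ('a \<times> 'a) set" where
  "lower_ord S k = (lower_gen S k)\<^sup>+"

definition upper_gen :: "'a phg \<Rightarrow> nat \<Rightarrow> ('a \<times> 'a) set" where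
  "upper_gen S k = {(a, b). a \<in> lvl S k \<and> b \<in> lvl S k \<and>
      (\<exists>\<alpha> \<in> lvl S (Suc k). a \<in> dom S \<alpha> \<and> cod S \<alpha> = b)}"

definition upper_ord :: "'a phg \<Rightarrow> nat \<Rightarrow> ('a \<times> 'a) set" where
  "upper_ord S k = (upper_gen S k)\<^sup>+"

definition comparable :: "('a \<times> 'a) set \<Rightarrow> 'a \<Rightarrow> 'a \<Rightarrow> bool" where
  "comparable R a b \<longleftrightarrow> (a, b) \<in> R \<or> (b, a) \<in> R"

definition linear_on :: "('a \<times> 'a) set \<Rightarrow> 'a set \<Rightarrow> bool" where
  "linear_on R X \<longleftrightarrow> (\<forall>a \<in> X. \<forall>b \<in> X. a \<noteq> b \<longrightarrow> comparable R a b)"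

definition positive_opetopic_cardinal :: "'a phg \<Rightarrow> bool" where
  "positive_opetopic_cardinal S \<longleftrightarrow>
     positive_hypergraph S \<and>
     lvl S 0 \<noteq> {} \<and>
     \<comment> \<open>globularity\<close>
     (\<forall>a \<in> faces S. dim S a \<ge> 2 \<longrightarrow>
        {cod S (cod S a)} = codS S (dom S a) - domS S (dom S a) \<and>
        dom S (cod S a) = domS S (dom S a) - codS S (dom S a)) \<and>
     \<comment> \<open>each upper order is a strict order\<close>
     (\<forall>k. irrefl (upper_ord S k)) \<and>
     \<comment> \<open>linear on S_0\<close>
     linear_on (upper_ord S 0) (lvl S 0) \<and>
     \<comment> \<open>disjointness of lower and upper comparability\<close>
     (\<forall>k > 0. \<forall>a \<in> lvl S k. \<forall>b \<in> lvl S k.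
        \<not> (comparable (lower_ord S k) a b \<and> comparable (upper_ord S k) a b)) \<and>
     \<comment> \<open>fibres linearly ordered by the upper order\<close>
     (\<forall>k. \<forall>x \<in> lvl S k.
        linear_on (upper_ord S (Suc k)) {a \<in> lvl S (Suc k). cod S a = x} \<and>
        linear_on (upper_ord S (Suc k)) {a \<in> lvl S (Suc k). x \<in> dom S a})"

definition positive_opetope :: "'a phg \<Rightarrow> bool" where
  "positive_opetope P \<longleftrightarrow>
     positive_opetopic_cardinal P \<and>
     (\<forall>m. card (lvl P m - domS P (lvl P (Suc m))) \<le> 1)"

definition op_phg :: "'a phg \<Rightarrow> 'a phg" where
  "op_phg P = P\<lparr> cod := (\<lambda>a. if dim P a = 1 then the_elem (dom P a) else cod P a),
                 dom := (\<lambda>a. if dim P a = 1 then {cod P a} else dom P a) \<rparr>"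

end

theory Submission
  imports Defs
begin

lemma op_simps:
  "faces (op_phg P) = faces P" "dim (op_phg P) = dim P"
  "cod (op_phg P) a = (if dim P a = 1 then the_elem (dom P a) else cod P a)"
  "dom (op_phg P) a = (if dim P a = 1 then {cod P a} else dom P a)"
  by (simp_all add: op_phg_def)

lemma op_lvl: "lvl (op_phg P) k = lvl P k"
  by (simp add: lvl_def op_simps)

lemma dim_lvl: "a \<in> lvl P k \<Longrightarrow> dim P a = k"
  by (simp add: lvl_def)

lemma comparable_conv: "comparable (r\<inverse>) a b = comparable r a b"
  by (auto simp: comparable_def)

lemma linear_conv: "linear_on (r\<inverse>) X = linear_on r X"
  by (simp add: linear_on_def comparable_conv)

context
  fixes P :: "'a phg"
  assumes H: "positive_hypergraph P"
begin

lemma dom1: "a \<in> lvl P 1 \<Longrightarrow> dom P a = {cod (op_phg P) a}"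
proof -
  assume a: "a \<in> lvl P 1"
  then have "card (dom P a) = 1" using H by (simp add: positive_hypergraph_def)
  then obtain x where x: "dom P a = {x}" by (auto simp: card_Suc_eq)
  then show ?thesis using a by (simp add: op_simps dim_lvl)
qed

lemma D1: "a \<in> lvl P 1 \<Longrightarrow> dom P a = {cod (op_phg P) a} \<and> dom (op_phg P) a = {cod P a}"
proof -
  assume a: "a \<in> lvl P 1"
  have "dom (op_phg P) a = {cod P a}" using a by (simp add: op_simps dim_lvl)
  then show ?thesis using dom1[OF a] by simp
qed

lemma cod_op_1: "a \<in> lvl P 1 \<Longrightarrow> dom P a = {the_elem (dom P a)}"
  using dom1 by (simp add: op_simps dim_lvl)

lemma up0: "upper_gen (op_phg P) 0 = (upper_gen P 0)\<inverse>"
  unfolding upper_gen_def op_lvl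
  apply (rule set_eqI)
  using D1 by auto

lemma upS: "upper_gen (op_phg P) (Suc k) = upper_gen P (Suc k)"
  unfolding upper_gen_def op_lvl
  by (auto simp: op_simps dim_lvl)

lemma upord0: "upper_ord (op_phg P) 0 = (upper_ord P 0)\<inverse>"
  by (simp add: upper_ord_def up0 trancl_converse)

lemma upordS: "upper_ord (op_phg P) (Suc k) = upper_ord P (Suc k)"
  by (simp add: upper_ord_def upS)

lemma upord: "irrefl (upper_ord (op_phg P) k) = irrefl (upper_ord P k)"
  by (cases k) (auto simp: upord0 upordS irrefl_def)

lemma low1: "lower_gen (op_phg P) 1 = (lower_gen P 1)\<inverse>"
  unfolding lower_gen_def op_lvl
  apply (rule set_eqI)
  using D1 by auto

lemma lowk: "k \<ge> 2 \<Longrightarrow> lower_gen (op_phg P) k = lower_gen P k"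
  unfolding lower_gen_def op_lvl
  by (auto simp: op_simps dim_lvl)

lemma compl_low: "k > 0 \<Longrightarrow> comparable (lower_ord (op_phg P) k) a b = comparable (lower_ord P k) a b"
proof -
  assume "k > 0"
  then consider "k = 1" | "k \<ge> 2" by linarith
  then show ?thesis
  proof cases
    case 1
    then show ?thesis by (simp only: lower_ord_def 1 low1 trancl_converse comparable_conv)
  next
    case 2
    then show ?thesis by (simp add: lower_ord_def lowk)
  qed
qed

lemma compl_up: "comparable (upper_ord (op_phg P) k) a b = comparable (upper_ord P k) a b"
  by (cases k) (simp_all add: upord0 upordS comparable_conv)

end

theorem mainTheorem9:
  assumes "positive_opetope P"
  shows "positive_opetope (op_phg P)"
proof -
  let ?Q = "op_phg P"
  have C: "positive_opetopic_cardinal P" using assms by (simp add: positive_opetope_def)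
  then have H: "positive_hypergraph P" by (simp add: positive_opetopic_cardinal_def)
  have fin: "finite (faces P)" using H by (simp add: positive_hypergraph_def)
  have HQ2: "\<forall>k. \<forall>a \<in> lvl P (Suc k). cod ?Q a \<in> lvl P k \<and> dom ?Q a \<subseteq> lvl P k \<and> dom ?Q a \<noteq> {}"
  proof (intro allI ballI)
    fix k a assume a: "a \<in> lvl P (Suc k)"
    show "cod ?Q a \<in> lvl P k \<and> dom ?Q a \<subseteq> lvl P k \<and> dom ?Q a \<noteq> {}"
    proof (cases "k = 0")
      case True
      then have a1: "a \<in> lvl P 1" using a by simp
      have "dom P a \<subseteq> lvl P 0" "cod P a \<in> lvl P 0" using H a True by (auto simp: positive_hypergraph_def)
      moreover have "dom P a = {cod ?Q a}" "dom ?Q a = {cod P a}" using D1[OF H a1] by auto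
      ultimately show ?thesis using True by simp
    next
      case False
      then show ?thesis using H a by (auto simp: positive_hypergraph_def op_simps dim_lvl)
    qed
  qed
  have HQ3: "\<forall>a\<in>lvl P 1. card (dom ?Q a) = 1" by (auto simp: op_simps dim_lvl)
  have HQ: "positive_hypergraph ?Q"
    unfolding positive_hypergraph_def op_lvl using fin HQ2 HQ3 by (simp add: op_simps)
  have glob: "\<forall>a \<in> faces ?Q. dim ?Q a \<ge> 2 \<longrightarrow>
        {cod ?Q (cod ?Q a)} = codS ?Q (dom ?Q a) - domS ?Q (dom ?Q a) \<and>
        dom ?Q (cod ?Q a) = domS ?Q (dom ?Q a) - codS ?Q (dom ?Q a)"
  proof (intro ballI impI)
    fix a assume a: "a \<in> faces ?Q" and d: "2 \<le> dim ?Q a"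
    have aP: "a \<in> faces P" "2 \<le> dim P a" using a d by (simp_all add: op_simps)
    have G1: "{cod P (cod P a)} = codS P (dom P a) - domS P (dom P a)"
      and G2: "dom P (cod P a) = domS P (dom P a) - codS P (dom P a)"
      using C aP by (auto simp: positive_opetopic_cardinal_def)
    have ca: "cod ?Q a = cod P a" "dom ?Q a = dom P a" using aP by (simp_all add: op_simps)
    show "{cod ?Q (cod ?Q a)} = codS ?Q (dom ?Q a) - domS ?Q (dom ?Q a) \<and>
        dom ?Q (cod ?Q a) = domS ?Q (dom ?Q a) - codS ?Q (dom ?Q a)"
    proof (cases "dim P a = 2")
      case False
      obtain j where j: "dim P a = Suc j" using aP by (cases "dim P a") auto
      have al: "a \<in> lvl P (Suc j)" using aP j by (simp add: lvl_def)
      have j2: "j \<ge> 2" using False aP j by auto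
      have "cod P a \<in> lvl P j" "dom P a \<subseteq> lvl P j"
        using H al by (auto simp: positive_hypergraph_def)
      then have e1: "cod ?Q (cod P a) = cod P (cod P a)" "dom ?Q (cod P a) = dom P (cod P a)"
        and e2: "codS ?Q (dom P a) = codS P (dom P a)" "domS ?Q (dom P a) = domS P (dom P a)"
        using j2 by (auto simp: op_simps dim_lvl codS_def domS_def)
      show ?thesis using G1 G2 ca e1 e2 by simp
    next
      case True
      have al: "a \<in> lvl P (Suc 1)" using aP True by (simp add: lvl_def)
      have cl: "cod P a \<in> lvl P 1" and dl: "dom P a \<subseteq> lvl P 1"
        using H al by (auto simp: positive_hypergraph_def simp del: One_nat_def)
      have D: "\<And>x. x \<in> lvl P 1 \<Longrightarrow> dom P x = {cod ?Q x} \<and> dom ?Q x = {cod P x}"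
        using D1[OF H] by blast
      have B: "\<And>x. x \<in> dom P a \<Longrightarrow> dom P x = {cod ?Q x} \<and> dom ?Q x = {cod P x}"
        using dl D by blast
      have "domS P (dom P a) = (\<Union>x\<in>dom P a. {cod ?Q x})"
        unfolding domS_def using B by (intro SUP_cong) auto
      also have "\<dots> = codS ?Q (dom P a)" unfolding codS_def by blast
      finally have cS: "codS ?Q (dom P a) = domS P (dom P a)" by simp
      have "domS ?Q (dom P a) = (\<Union>x\<in>dom P a. {cod P x})"
        unfolding domS_def using B by (intro SUP_cong) auto
      also have "\<dots> = codS P (dom P a)" unfolding codS_def by blast
      finally have dS: "domS ?Q (dom P a) = codS P (dom P a)" by simp
      show ?thesis using G1 G2 ca cS dS D[OF cl] by auto
    qed
  qed
  have lin0: "linear_on (upper_ord P 0) (lvl P 0)" using C by (simp add: positive_opetopic_cardinal_def)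
  have fib: "\<forall>k. \<forall>x \<in> lvl ?Q k.
        linear_on (upper_ord ?Q (Suc k)) {a \<in> lvl ?Q (Suc k). cod ?Q a = x} \<and>
        linear_on (upper_ord ?Q (Suc k)) {a \<in> lvl ?Q (Suc k). x \<in> dom ?Q a}"
  proof (intro allI ballI)
    fix k x assume x: "x \<in> lvl ?Q k"
    have F: "linear_on (upper_ord P (Suc k)) {a \<in> lvl P (Suc k). cod P a = x} \<and>
        linear_on (upper_ord P (Suc k)) {a \<in> lvl P (Suc k). x \<in> dom P a}"
      using C x by (simp add: positive_opetopic_cardinal_def op_lvl)
    show "linear_on (upper_ord ?Q (Suc k)) {a \<in> lvl ?Q (Suc k). cod ?Q a = x} \<and>
        linear_on (upper_ord ?Q (Suc k)) {a \<in> lvl ?Q (Suc k). x \<in> dom ?Q a}"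
    proof (cases k)
      case 0
      have D: "\<And>a. a \<in> lvl P 1 \<Longrightarrow> dom P a = {cod ?Q a} \<and> dom ?Q a = {cod P a}"
        using D1[OF H] by blast
      have s1: "{a \<in> lvl P (Suc 0). cod ?Q a = x} = {a \<in> lvl P (Suc 0). x \<in> dom P a}" using D by auto
      have s2: "{a \<in> lvl P (Suc 0). x \<in> dom ?Q a} = {a \<in> lvl P (Suc 0). cod P a = x}" using D by auto
      show ?thesis using F 0 s1 s2 by (simp add: op_lvl upordS[OF H] del: One_nat_def) 
    next
      case (Suc j)
      have s1: "{a \<in> lvl P (Suc k). cod ?Q a = x} = {a \<in> lvl P (Suc k). cod P a = x}"
        "{a \<in> lvl P (Suc k). x \<in> dom ?Q a} = {a \<in> lvl P (Suc k). x \<in> dom P a}"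
        using Suc by (auto simp: op_simps dim_lvl)
      show ?thesis using F s1 by (simp add: op_lvl upordS[OF H])
    qed
  qed
  have card: "\<forall>m. card (lvl ?Q m - domS ?Q (lvl ?Q (Suc m))) \<le> 1"
  proof
    fix m
    show "card (lvl ?Q m - domS ?Q (lvl ?Q (Suc m))) \<le> 1"
    proof (cases m)
      case (Suc j)
      have "domS ?Q (lvl P (Suc m)) = domS P (lvl P (Suc m))"
        using Suc by (auto simp: domS_def op_simps dim_lvl)
      then show ?thesis using assms by (simp add: op_lvl positive_opetope_def)
    next
      case 0
      have dS: "domS ?Q (lvl P 1) = cod P ` lvl P 1"
        by (auto simp: domS_def op_simps dim_lvl)
      have finl: "finite (lvl P 0)" using fin by (simp add: lvl_def)
      have R: "\<And>y z. (y, z) \<in> upper_ord P 0 \<Longrightarrow> z \<in> cod P ` lvl P 1"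
      proof -
        fix y z assume "(y, z) \<in> upper_ord P 0"
        then obtain w where "(w, z) \<in> upper_gen P 0" unfolding upper_ord_def
          by (meson tranclE)
        then show "z \<in> cod P ` lvl P 1" by (auto simp: upper_gen_def)
      qed
      have "\<forall>y\<in>lvl P 0 - cod P ` lvl P 1. \<forall>z\<in>lvl P 0 - cod P ` lvl P 1. y = z"
      proof (intro ballI, rule ccontr)
        fix y z assume y: "y \<in> lvl P 0 - cod P ` lvl P 1" and z: "z \<in> lvl P 0 - cod P ` lvl P 1" and ne: "y \<noteq> z"
        then have "comparable (upper_ord P 0) y z" using lin0 unfolding linear_on_def by auto
        then show False using R y z unfolding comparable_def by auto
      qed
      then have "card (lvl P 0 - cod P ` lvl P 1) \<le> Suc 0"
        using finl by (subst card_le_Suc0_iff_eq) auto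
      then show ?thesis using 0 dS by (simp add: op_lvl)
    qed
  qed
  show ?thesis
    unfolding positive_opetope_def positive_opetopic_cardinal_def
  proof (intro conjI HQ glob fib card)
    show "lvl ?Q 0 \<noteq> {}" using C by (simp add: op_lvl positive_opetopic_cardinal_def)
    show "\<forall>k. irrefl (upper_ord ?Q k)" using C upord[OF H] by (simp add: positive_opetopic_cardinal_def)
    show "linear_on (upper_ord ?Q 0) (lvl ?Q 0)" using lin0 by (simp add: op_lvl upord0[OF H] linear_conv)
    show "\<forall>k>0. \<forall>a\<in>lvl ?Q k. \<forall>b\<in>lvl ?Q k.
        \<not> (comparable (lower_ord ?Q k) a b \<and> comparable (upper_ord ?Q k) a b)"
      using C by (simp add: op_lvl compl_low[OF H] compl_up[OF H] positive_opetopic_cardinal_def)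
  qed
qed

end
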